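(* Let $X$ be a complex Banach space with open unit ball $B$, and suppose $X$ is locally uniformly convex at $x\in S_X$. Then both the cluster value theorem and the polynomial cluster value theorem hold for $A_\infty(B)$ at $x$, i.e. $Cl_B(f,x)=\hat f(M_x)$ and $Cl_B^{\mathcal P}(f,x)=\hat f(M^{\mathcal P}_x)$ for all $f\in A_\infty(B)$.
   Context: $X$ is locally uniformly convex at $x$ if $\|y_n-x\|\to0$ whenever $\|y_n\|\to\|x\|$ and $\|x+y_n\|\to2\|x\|$. $A_\infty(B)$: bounded holomorphic functions on $B$ extending continuously to $\bar B$, sup norm; $M_{A_\infty(B)}$ its spectrum, $\hat f$ the Gelfand transform; $A_u(B)$: uniformly continuous holomorphic functions on $B$; $P(X)$ continuous polynomials, $\tilde P,\tilde g$ Aron–Berner extensions to $X^{**}$. $Cl_B(f,x)=\{\lambda:\exists\text{ net }(x_\alpha)\subset B,\ x_\alpha\to x\text{ weak-star},\ f(x_\alpha)\to\lambda\}$; $M_x=\{\tau:\tau(L)=L(x)\ \forall L\in X^*\}$; $Cl_B^{\mathcal P}(f,x)=\{\lambda:\exists\text{ net }(x_\alpha)\subset B,\ P(x_\alpha)\to\tilde P(x)\ \forall P\in P(X),\ f(x_\alpha)\to\lambda\}$; $M^{\mathcal P}_x=\{\tau:\tau(g)=\tilde g(x)\ \forall g\in A_u(B)\}$. *)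

theory Defs
  imports "HOL-Analysis.Analysis"
begin

text \<open>A complex Banach space: a real Banach space (type class banach) together with a
complex scalar multiplication sc extending the real one, with absolutely homogeneous norm.\<close>
definition complex_banach :: "(complex \<Rightarrow> 'a::banach \<Rightarrow> 'a) \<Rightarrow> bool" where
  "complex_banach sc \<longleftrightarrow>
     (\<forall>r x. sc (complex_of_real r) x = r *\<^sub>R x) \<and>
     (\<forall>a b x. sc (a * b) x = sc a (sc b x)) \<and>
     (\<forall>a b x. sc (a + b) x = sc a x + sc b x) \<and>
     (\<forall>a x y. sc a (x + y) = sc a x + sc a y) \<and>
     (\<forall>a x. norm (sc a x) = cmod a * norm x)"

definition clinear_fun :: "(complex \<Rightarrow> 'a::banach \<Rightarrow> 'a) \<Rightarrow> ('a \<Rightarrow> complex) \<Rightarrow> bool" where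
  "clinear_fun sc L \<longleftrightarrow> (\<forall>x y. L (x + y) = L x + L y) \<and> (\<forall>c x. L (sc c x) = c * L x)"

definition dual_space :: "(complex \<Rightarrow> 'a::banach \<Rightarrow> 'a) \<Rightarrow> ('a \<Rightarrow> complex) set" where
  "dual_space sc = {L. bounded_linear L \<and> clinear_fun sc L}"

definition holo_on :: "(complex \<Rightarrow> 'a::banach \<Rightarrow> 'a) \<Rightarrow> 'a set \<Rightarrow> ('a \<Rightarrow> complex) \<Rightarrow> bool" where
  "holo_on sc U f \<longleftrightarrow> (\<forall>x\<in>U. \<exists>D. (f has_derivative D) (at x) \<and> clinear_fun sc D)"

text \<open>An element is represented by its (unique)
continuous extension to the closed unit ball, normalised to 0 outside the closed ball;
the algebra operations are the pointwise ones.\<close>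
definition A_inf :: "(complex \<Rightarrow> 'a::banach \<Rightarrow> 'a) \<Rightarrow> ('a \<Rightarrow> complex) set" where
  "A_inf sc = {f. holo_on sc (ball 0 1) f \<and> bounded (f ` ball 0 1) \<and>
                  continuous_on (cball 0 1) f \<and> (\<forall>x. 1 < norm x \<longrightarrow> f x = 0)}"

definition spectrum_A_inf :: "(complex \<Rightarrow> 'a::banach \<Rightarrow> 'a) \<Rightarrow> (('a \<Rightarrow> complex) \<Rightarrow> complex) set" where
  "spectrum_A_inf sc = {\<tau>.
     (\<forall>f\<in>A_inf sc. \<forall>g\<in>A_inf sc. \<tau> (\<lambda>x. f x + g x) = \<tau> f + \<tau> g) \<and>
     (\<forall>f\<in>A_inf sc. \<forall>c. \<tau> (\<lambda>x. c * f x) = c * \<tau> f) \<and>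
     (\<forall>f\<in>A_inf sc. \<forall>g\<in>A_inf sc. \<tau> (\<lambda>x. f x * g x) = \<tau> f * \<tau> g) \<and>
     (\<exists>f\<in>A_inf sc. \<tau> f \<noteq> 0)}"

definition gelfand :: "('a \<Rightarrow> complex) \<Rightarrow> (('a \<Rightarrow> complex) \<Rightarrow> complex) \<Rightarrow> complex" where
  "gelfand f \<tau> = \<tau> f"

text \<open>Restriction of a function to the closed unit ball (so it can be fed to a character).\<close>
definition restr_ball :: "('a::real_normed_vector \<Rightarrow> complex) \<Rightarrow> 'a \<Rightarrow> complex" where
  "restr_ball L = (\<lambda>y. if norm y \<le> 1 then L y else 0)"

definition fiber :: "(complex \<Rightarrow> 'a::banach \<Rightarrow> 'a) \<Rightarrow> 'a \<Rightarrow> (('a \<Rightarrow> complex) \<Rightarrow> complex) set" where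
  "fiber sc x = {\<tau>\<in>spectrum_A_inf sc. \<forall>L\<in>dual_space sc. \<tau> (restr_ball L) = L x}"

text \<open>Polynomial fiber M^P_x: characters agreeing at x with the (Aron--Berner extension of)
every g in A_u(B). For x in X (closed ball) the Aron--Berner extension at x is the value
of the continuous extension of g at x.\<close>
definition poly_fiber :: "(complex \<Rightarrow> 'a::banach \<Rightarrow> 'a) \<Rightarrow> 'a \<Rightarrow> (('a \<Rightarrow> complex) \<Rightarrow> complex) set" where
  "poly_fiber sc x = {\<tau>\<in>spectrum_A_inf sc.
      \<forall>g\<in>A_inf sc. uniformly_continuous_on (ball 0 1) g \<longrightarrow> \<tau> g = g x}"

text \<open>Continuous complex k-linear forms, arguments given as nat-indexed families
(only indices < k matter).\<close>
definition cont_multilinear :: "(complex \<Rightarrow> 'a::banach \<Rightarrow> 'a) \<Rightarrow> nat \<Rightarrow> ((nat \<Rightarrow> 'a) \<Rightarrow> complex) \<Rightarrow> bool" where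
  "cont_multilinear sc k A \<longleftrightarrow>
     (\<forall>v w. (\<forall>i<k. v i = w i) \<longrightarrow> A v = A w) \<and>
     (\<forall>i<k. \<forall>v. clinear_fun sc (\<lambda>y. A (v(i := y)))) \<and>
     (\<exists>C. \<forall>v. cmod (A v) \<le> C * (\<Prod>i<k. norm (v i)))"

definition cont_poly :: "(complex \<Rightarrow> 'a::banach \<Rightarrow> 'a) \<Rightarrow> ('a \<Rightarrow> complex) \<Rightarrow> bool" where
  "cont_poly sc P \<longleftrightarrow> (\<exists>n A. (\<forall>k\<le>n. cont_multilinear sc k (A k)) \<and>
                              (\<forall>x. P x = (\<Sum>k\<le>n. A k (\<lambda>_. x))))"

text \<open>Cluster set Cl_B(f,x), x in X: limits of f along nets (here: proper filters) in B
converging weak-star (in X^{**}, i.e. weakly) to x.\<close>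
definition cluster_set :: "(complex \<Rightarrow> 'a::banach \<Rightarrow> 'a) \<Rightarrow> ('a \<Rightarrow> complex) \<Rightarrow> 'a \<Rightarrow> complex set" where
  "cluster_set sc f x = {l. \<exists>F. F \<noteq> bot \<and> eventually (\<lambda>y. y \<in> ball 0 1) F \<and>
       (\<forall>L\<in>dual_space sc. (L \<longlongrightarrow> L x) F) \<and> (f \<longlongrightarrow> l) F}"

text \<open>Polynomial cluster set Cl^P_B(f,x), x in X (Aron--Berner extension of P at x is P x).\<close>
definition poly_cluster_set :: "(complex \<Rightarrow> 'a::banach \<Rightarrow> 'a) \<Rightarrow> ('a \<Rightarrow> complex) \<Rightarrow> 'a \<Rightarrow> complex set" where
  "poly_cluster_set sc f x = {l. \<exists>F. F \<noteq> bot \<and> eventually (\<lambda>y. y \<in> ball 0 1) F \<and>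
       (\<forall>P. cont_poly sc P \<longrightarrow> (P \<longlongrightarrow> P x) F) \<and> (f \<longlongrightarrow> l) F}"

definition loc_unif_convex_at :: "'a::real_normed_vector \<Rightarrow> bool" where
  "loc_unif_convex_at x \<longleftrightarrow> (\<forall>y :: nat \<Rightarrow> 'a.
     (\<lambda>n. norm (y n)) \<longlonglongrightarrow> norm x \<and> (\<lambda>n. norm (x + y n)) \<longlonglongrightarrow> 2 * norm x
       \<longrightarrow> (\<lambda>n. norm (y n - x)) \<longlonglongrightarrow> 0)"

end

theory Submission
  imports Defs
begin



definition hbgood :: "('a::real_normed_vector \<times> real) set \<Rightarrow> bool" where
  "hbgood G \<longleftrightarrow> (\<forall>u a v b. (u,a)\<in>G \<longrightarrow> (v,b)\<in>G \<longrightarrow> (u+v,a+b)\<in>G) \<and>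
     (\<forall>u a r. (u,a)\<in>G \<longrightarrow> (r *\<^sub>R u, r*a)\<in>G) \<and> (\<forall>u a. (u,a)\<in>G \<longrightarrow> a \<le> norm u)"

lemma hbgood_fun:
  assumes "hbgood G" "(u,a)\<in>G" "(u,b)\<in>G" shows "a = b"
proof -
  have "(u + (-1) *\<^sub>R u, a + (-1)*b) \<in> G" using assms unfolding hbgood_def by blast
  hence 1: "a - b \<le> 0" using assms(1) unfolding hbgood_def by fastforce
  have "(u + (-1) *\<^sub>R u, b + (-1)*a) \<in> G" using assms unfolding hbgood_def by blast
  hence 2: "b - a \<le> 0" using assms(1) unfolding hbgood_def by fastforce
  from 1 2 show ?thesis by simp
qed

lemma hbgood_extend:
  fixes M :: "('a::real_normed_vector \<times> real) set"
  assumes g: "hbgood M" and z0: "(0,0) \<in> M" and nz: "\<forall>a. (z,a) \<notin> M"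
  shows "\<exists>M'. hbgood M' \<and> M \<subset> M'"
proof -
  define Lw where "Lw = {a - norm (u - z) | u a. (u,a)\<in>M}"
  define Rw where "Rw = {norm (v + z) - b | v b. (v,b)\<in>M}"
  have lr: "l \<le> r" if lrm: "l \<in> Lw" "r \<in> Rw" for l r
  proof -
    obtain u a v b where ua: "(u,a)\<in>M" "l = a - norm (u - z)" and vb: "(v,b)\<in>M" "r = norm (v+z) - b"
      using lrm unfolding Lw_def Rw_def by blast
    have "(u+v,a+b)\<in>M" using g ua vb unfolding hbgood_def by blast
    hence "a + b \<le> norm (u+v)" using g unfolding hbgood_def by blast
    also have "u + v = (u - z) + (v + z)" by simp
    also have "norm \<dots> \<le> norm (u - z) + norm (v + z)" by (rule norm_triangle_ineq)
    finally show ?thesis using ua vb by simp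
  qed
  have Lne: "Lw \<noteq> {}" using z0 unfolding Lw_def by blast
  have Rne: "Rw \<noteq> {}" using z0 unfolding Rw_def by blast
  then obtain r0 where r0: "r0 \<in> Rw" by blast
  define c where "c = Sup Lw"
  have bdd: "bdd_above Lw" using lr r0 by (meson bdd_above_def)
  have cL: "l \<le> c" if "l \<in> Lw" for l using cSup_upper[OF that bdd] c_def by simp
  have cR: "c \<le> r" if "r \<in> Rw" for r unfolding c_def using Lne lr that by (meson cSup_least)
  define M' where "M' = {(u + t *\<^sub>R z, a + t * c) | u a t. (u,a)\<in>M}"
  have dom: "a + t * c \<le> norm (u + t *\<^sub>R z)" if ua: "(u,a)\<in>M" for u a t
  proof (cases "t = 0")
    case True then show ?thesis using g ua unfolding hbgood_def by auto
  next
    case False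
    show ?thesis
    proof (cases "t > 0")
      case True
      have "((1/t) *\<^sub>R u, (1/t)*a) \<in> M" using g ua unfolding hbgood_def by blast
      hence "norm ((1/t) *\<^sub>R u + z) - (1/t)*a \<in> Rw" unfolding Rw_def by blast
      hence "c \<le> norm ((1/t) *\<^sub>R u + z) - (1/t)*a" by (rule cR)
      hence "t * c \<le> t * (norm ((1/t) *\<^sub>R u + z) - (1/t)*a)" using True by simp
      also have "\<dots> = norm (t *\<^sub>R ((1/t) *\<^sub>R u + z)) - a" using True by (simp add: right_diff_distrib)
      also have "t *\<^sub>R ((1/t) *\<^sub>R u + z) = u + t *\<^sub>R z" using True by (simp add: scaleR_add_right)
      finally show ?thesis by simp
    next
      case False
      define s where "s = - t"
      have s: "s > 0" using False \<open>t \<noteq> 0\<close> s_def by simp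
      have "((1/s) *\<^sub>R u, (1/s)*a) \<in> M" using g ua unfolding hbgood_def by blast
      hence "(1/s)*a - norm ((1/s) *\<^sub>R u - z) \<in> Lw" unfolding Lw_def by blast
      hence "(1/s)*a - norm ((1/s) *\<^sub>R u - z) \<le> c" by (rule cL)
      hence "s * ((1/s)*a - norm ((1/s) *\<^sub>R u - z)) \<le> s * c" using s by simp
      hence A: "a - norm (s *\<^sub>R ((1/s) *\<^sub>R u - z)) \<le> s * c" using s by (simp add: right_diff_distrib)
      have B: "s *\<^sub>R ((1/s) *\<^sub>R u - z) = u + t *\<^sub>R z" using s s_def by (simp add: scaleR_diff_right)
      have "a - norm (u + t *\<^sub>R z) \<le> s * c" using A unfolding B .
      then show ?thesis using s_def by simp
    qed
  qed
  have "hbgood M'"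
    unfolding hbgood_def
  proof (intro conjI allI impI)
    fix u a v b assume "(u,a)\<in>M'" "(v,b)\<in>M'"
    then obtain u1 a1 t1 u2 a2 t2 where "(u1,a1)\<in>M" "(u2,a2)\<in>M" "u = u1 + t1 *\<^sub>R z" "a = a1 + t1*c"
       "v = u2 + t2 *\<^sub>R z" "b = a2 + t2*c" unfolding M'_def by blast
    moreover have "(u1+u2, a1+a2)\<in>M" using g calculation unfolding hbgood_def by blast
    ultimately show "(u+v,a+b)\<in>M'" unfolding M'_def
      by (intro CollectI exI[of _ "u1+u2"] exI[of _ "a1+a2"] exI[of _ "t1+t2"])
         (simp add: algebra_simps scaleR_add_left)
  next
    fix u a r assume "(u,a)\<in>M'"
    then obtain u1 a1 t1 where "(u1,a1)\<in>M" "u = u1 + t1 *\<^sub>R z" "a = a1 + t1*c" unfolding M'_def by blast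
    moreover have "(r *\<^sub>R u1, r*a1)\<in>M" using g calculation unfolding hbgood_def by blast
    ultimately show "(r *\<^sub>R u, r*a)\<in>M'" unfolding M'_def
      by (intro CollectI exI[of _ "r *\<^sub>R u1"] exI[of _ "r*a1"] exI[of _ "r*t1"])
         (simp add: algebra_simps scaleR_add_right)
  next
    fix u a assume "(u,a)\<in>M'"
    then show "a \<le> norm u" using dom unfolding M'_def by blast
  qed
  moreover have "M \<subseteq> M'" unfolding M'_def by (force intro: exI[of _ 0])
  moreover have "(z, c) \<in> M'" unfolding M'_def using z0
    by (intro CollectI exI[of _ 0] exI[of _ "0::real"] exI[of _ 1]) simp
  ultimately show ?thesis using nz by blast
qed

lemma hahn_banach_norm:
  fixes x :: "'a::real_normed_vector"
  assumes "norm x = 1"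
  shows "\<exists>l. linear l \<and> l x = 1 \<and> (\<forall>y. \<bar>l y\<bar> \<le> norm y)"
proof -
  define G0 where "G0 = {(r *\<^sub>R x, r) | r. True}"
  define A where "A = {G. hbgood G \<and> G0 \<subseteq> G}"
  have G0: "hbgood G0" unfolding hbgood_def G0_def using assms
    by (auto simp: scaleR_add_left)
  have "\<forall>C\<in>chains A. \<exists>U\<in>A. \<forall>X\<in>C. X \<subseteq> U"
  proof
    fix C assume C: "C \<in> chains A"
    show "\<exists>U\<in>A. \<forall>X\<in>C. X \<subseteq> U"
    proof (cases "C = {}")
      case True then show ?thesis using G0 A_def by blast
    next
      case False
      have sub: "C \<subseteq> A" and ch: "\<forall>X\<in>C. \<forall>Y\<in>C. X \<subseteq> Y \<or> Y \<subseteq> X"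
        using C unfolding chains_def chain_subset_def by auto
      have "hbgood (\<Union>C)" unfolding hbgood_def
      proof (intro conjI allI impI)
        fix u a v b assume "(u,a)\<in>\<Union>C" "(v,b)\<in>\<Union>C"
        then obtain X Y where XY: "X\<in>C" "Y\<in>C" "(u,a)\<in>X" "(v,b)\<in>Y" by blast
        have gX: "hbgood X" "hbgood Y" using sub XY A_def by auto
        have "X \<subseteq> Y \<or> Y \<subseteq> X" using ch XY by blast
        then show "(u+v,a+b)\<in>\<Union>C"
        proof
          assume "X \<subseteq> Y"
          then have "(u+v,a+b)\<in>Y" using gX XY unfolding hbgood_def by blast
          then show ?thesis using XY by blast
        next
          assume "Y \<subseteq> X"
          then have "(u+v,a+b)\<in>X" using gX XY unfolding hbgood_def by blast
          then show ?thesis using XY by blast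
        qed
      next
        fix u a r assume "(u,a)\<in>\<Union>C"
        then obtain X where "X\<in>C" "(u,a)\<in>X" by blast
        moreover have "hbgood X" using sub calculation A_def by auto
        ultimately show "(r *\<^sub>R u, r*a)\<in>\<Union>C" unfolding hbgood_def by blast
      next
        fix u a assume "(u,a)\<in>\<Union>C"
        then obtain X where "X\<in>C" "(u,a)\<in>X" by blast
        moreover have "hbgood X" using sub calculation A_def by auto
        ultimately show "a \<le> norm u" unfolding hbgood_def by blast
      qed
      moreover have "G0 \<subseteq> \<Union>C" using False sub A_def by blast
      ultimately show ?thesis unfolding A_def by blast
    qed
  qed
  from Zorn_Lemma2[OF this] obtain M where M: "M \<in> A" and max: "\<forall>X\<in>A. M \<subseteq> X \<longrightarrow> X = M" by blast
  have g: "hbgood M" and G0M: "G0 \<subseteq> M" using M A_def by auto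
  have z0: "(0,0)\<in>M" using G0M unfolding G0_def by force
  have tot: "\<exists>a. (z,a)\<in>M" for z
  proof (rule ccontr)
    assume "\<not> ?thesis"
    then obtain M' where "hbgood M'" "M \<subset> M'" using hbgood_extend[OF g z0] by blast
    then show False using max G0M A_def by blast
  qed
  define l where "l z = (THE a. (z,a)\<in>M)" for z
  have lM: "(z, l z) \<in> M" for z unfolding l_def
    using tot[of z] hbgood_fun[OF g] by (metis theI)
  have leq: "(z,a)\<in>M \<Longrightarrow> l z = a" for z a using hbgood_fun[OF g lM] by blast
  have lin: "linear l"
  proof
    fix u v show "l (u + v) = l u + l v"
      using g lM leq unfolding hbgood_def by blast
  next
    fix r u show "l (r *\<^sub>R u) = r *\<^sub>R l u"
      using g lM leq unfolding hbgood_def by simp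
  qed
  have "(x,1)\<in>M" using G0M unfolding G0_def by (force intro: exI[of _ 1])
  hence "l x = 1" by (rule leq)
  moreover have "\<bar>l y\<bar> \<le> norm y" for y
  proof -
    have "l y \<le> norm y" using g lM unfolding hbgood_def by blast
    moreover have "l (-y) \<le> norm (-y)" using g lM unfolding hbgood_def by blast
    moreover have "l (-y) = - l y" using lin by (simp add: linear_neg)
    ultimately show ?thesis by simp
  qed
  ultimately show ?thesis using lin by blast
qed




context
  fixes sc :: "complex \<Rightarrow> 'a::banach \<Rightarrow> 'a"
  assumes cb: "complex_banach sc"
begin

lemma sc_real: "sc (complex_of_real r) y = r *\<^sub>R y" using cb unfolding complex_banach_def by blast
lemma sc_mult: "sc (a * b) y = sc a (sc b y)" using cb unfolding complex_banach_def by blast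
lemma sc_addl: "sc (a + b) y = sc a y + sc b y" using cb unfolding complex_banach_def by blast
lemma sc_addr: "sc a (y + z) = sc a y + sc a z" using cb unfolding complex_banach_def by blast
lemma sc_norm: "norm (sc a y) = cmod a * norm y" using cb unfolding complex_banach_def by blast

lemma sc_scaleR: "sc a (r *\<^sub>R y) = r *\<^sub>R sc a y"
proof -
  have "sc a (r *\<^sub>R y) = sc a (sc (of_real r) y)" by (simp add: sc_real)
  also have "\<dots> = sc (of_real r * a) y" by (simp add: sc_mult mult.commute)
  also have "\<dots> = r *\<^sub>R sc a y" by (simp add: sc_mult sc_real)
  finally show ?thesis .
qed

lemma sc_decomp: "sc c y = Re c *\<^sub>R y + Im c *\<^sub>R sc \<i> y"
proof -
  have "c = of_real (Re c) + \<i> * of_real (Im c)" by (simp add: complex_eq_iff)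
  hence "sc c y = sc (of_real (Re c)) y + sc \<i> (sc (of_real (Im c)) y)"
    by (metis sc_addl sc_mult)
  then show ?thesis by (simp add: sc_real sc_scaleR)
qed

lemma sc_ii: "sc \<i> (sc \<i> y) = - y"
proof -
  have a: "sc \<i> (sc \<i> y) = sc (-1) y" by (simp add: sc_mult[symmetric])
  have b: "sc (-1) y = - y" using sc_real[of "-1" y] by simp
  show ?thesis using a b by simp
qed

lemma complex_norming:
  assumes "norm x = 1"
  shows "\<exists>L\<in>dual_space sc. L x = 1 \<and> (\<forall>y. cmod (L y) \<le> norm y)"
proof -
  obtain l where lin: "linear l" and lx: "l x = 1" and lb: "\<And>y. \<bar>l y\<bar> \<le> norm y"
    using hahn_banach_norm[OF assms] by blast
  define L where "L y = complex_of_real (l y) - \<i> * complex_of_real (l (sc \<i> y))" for y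
  have ladd: "l (u + v) = l u + l v" for u v using lin by (simp add: linear_add)
  have lsc: "l (r *\<^sub>R u) = r * l u" for r u using lin by (simp add: linear_scale)
  have lneg: "l (- u) = - l u" for u using lin by (simp add: linear_neg)
  have Ladd: "L (u + v) = L u + L v" for u v unfolding L_def by (simp add: sc_addr ladd algebra_simps)
  have Lsc: "L (sc c y) = c * L y" for c y
  proof -
    have 1: "l (sc c y) = Re c * l y + Im c * l (sc \<i> y)" unfolding sc_decomp[of c y] by (simp add: ladd lsc)
    have "sc \<i> (sc c y) = Re c *\<^sub>R sc \<i> y + Im c *\<^sub>R (- y)"
      unfolding sc_decomp[of c y] by (simp add: sc_addr sc_scaleR sc_ii)
    hence 2: "l (sc \<i> (sc c y)) = Re c * l (sc \<i> y) - Im c * l y" by (simp add: ladd lsc lneg linear_diff[OF lin])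
    show ?thesis unfolding L_def 1 2 by (simp add: complex_eq_iff algebra_simps)
  qed
  have Lb: "cmod (L y) \<le> norm y" for y
  proof (cases "L y = 0")
    case True then show ?thesis by simp
  next
    case False
    define c where "c = cnj (L y) / complex_of_real (cmod (L y))"
    have cm: "cmod c = 1" using False unfolding c_def by (simp add: norm_divide)
    have sq: "cnj (L y) * L y = (complex_of_real (cmod (L y)))^2"
      using complex_norm_square[of "L y"] by (simp add: mult.commute)
    have "L (sc c y) = cnj (L y) * L y / complex_of_real (cmod (L y))" unfolding Lsc c_def by simp
    also have "\<dots> = complex_of_real (cmod (L y))" unfolding sq using False by (simp add: power2_eq_square)
    finally have "L (sc c y) = complex_of_real (cmod (L y))" .
    hence "Re (L (sc c y)) = cmod (L y)" by simp
    moreover have "Re (L (sc c y)) = l (sc c y)" unfolding L_def by simp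
    moreover have "l (sc c y) \<le> norm (sc c y)" using lb abs_le_D1 by blast
    moreover have "norm (sc c y) = norm y" using cm by (simp add: sc_norm)
    ultimately show ?thesis by simp
  qed
  have Lx: "L x = 1"
  proof -
    have r: "Re (L x) = 1" unfolding L_def using lx by simp
    have "cmod (L x) \<le> 1" using Lb[of x] assms by simp
    hence "(Re (L x))^2 + (Im (L x))^2 \<le> 1"
      by (metis cmod_power2 norm_ge_zero power_le_one)
    hence "Im (L x) = 0" using r by simp
    then show ?thesis using r by (simp add: complex_eq_iff)
  qed
  have "bounded_linear L"
  proof (rule bounded_linear_intro[where K=1])
    show "L (u + v) = L u + L v" for u v by (rule Ladd)
    show "L (r *\<^sub>R u) = r *\<^sub>R L u" for r u
      using Lsc[of "of_real r" u] by (simp add: sc_real scaleR_conv_of_real)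
    show "norm (L u) \<le> norm u * 1" for u using Lb by simp
  qed
  moreover have "clinear_fun sc L" unfolding clinear_fun_def using Ladd Lsc by blast
  ultimately show ?thesis using Lx Lb unfolding dual_space_def by blast
qed

end



lemma clinear_add: "clinear_fun sc D1 \<Longrightarrow> clinear_fun sc D2 \<Longrightarrow> clinear_fun sc (\<lambda>h. D1 h + D2 h)"
  unfolding clinear_fun_def by (simp add: algebra_simps)
lemma clinear_cmult: "clinear_fun sc D \<Longrightarrow> clinear_fun sc (\<lambda>h. c * D h)"
  unfolding clinear_fun_def by (simp add: algebra_simps)
lemma clinear_zero: "clinear_fun sc (\<lambda>h. 0)"
  unfolding clinear_fun_def by simp

lemma holo_add: "holo_on sc U f \<Longrightarrow> holo_on sc U g \<Longrightarrow> holo_on sc U (\<lambda>y. f y + g y)"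
  unfolding holo_on_def
proof (intro ballI)
  fix y assume f: "\<forall>x\<in>U. \<exists>D. (f has_derivative D) (at x) \<and> clinear_fun sc D"
    and g: "\<forall>x\<in>U. \<exists>D. (g has_derivative D) (at x) \<and> clinear_fun sc D" and y: "y \<in> U"
  obtain D1 D2 where "(f has_derivative D1) (at y)" "clinear_fun sc D1"
    "(g has_derivative D2) (at y)" "clinear_fun sc D2" using f g y by blast
  then show "\<exists>D. ((\<lambda>y. f y + g y) has_derivative D) (at y) \<and> clinear_fun sc D"
    by (intro exI[of _ "\<lambda>h. D1 h + D2 h"] conjI has_derivative_add clinear_add)
qed
lemma holo_const: "holo_on sc U (\<lambda>y. c)"
  unfolding holo_on_def using clinear_zero has_derivative_const by blast
lemma holo_mult: "holo_on sc U f \<Longrightarrow> holo_on sc U g \<Longrightarrow> holo_on sc U (\<lambda>y. f y * g y)"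
  unfolding holo_on_def
proof (intro ballI)
  fix y assume f: "\<forall>x\<in>U. \<exists>D. (f has_derivative D) (at x) \<and> clinear_fun sc D"
    and g: "\<forall>x\<in>U. \<exists>D. (g has_derivative D) (at x) \<and> clinear_fun sc D" and y: "y \<in> U"
  obtain D1 D2 where "(f has_derivative D1) (at y)" "clinear_fun sc D1"
    "(g has_derivative D2) (at y)" "clinear_fun sc D2" using f g y by blast
  then show "\<exists>D. ((\<lambda>y. f y * g y) has_derivative D) (at y) \<and> clinear_fun sc D"
    by (intro exI[of _ "\<lambda>h. f y * D2 h + D1 h * g y"] conjI has_derivative_mult)
       (auto simp: clinear_fun_def algebra_simps)
qed
lemma holo_inverse:
  assumes "holo_on sc U f" "\<forall>y\<in>U. f y \<noteq> 0"
  shows "holo_on sc U (\<lambda>y. inverse (f y))"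
  unfolding holo_on_def
proof (intro ballI)
  fix y assume y: "y \<in> U"
  obtain D where "(f has_derivative D) (at y)" "clinear_fun sc D" using assms(1) y unfolding holo_on_def by blast
  then have "((\<lambda>y. inverse (f y)) has_derivative (\<lambda>h. - (inverse (f y) * D h * inverse (f y)))) (at y)"
    "clinear_fun sc (\<lambda>h. - (inverse (f y) * D h * inverse (f y)))"
    using assms(2) y Deriv.has_derivative_inverse[of f y D UNIV]
    by (auto simp: clinear_fun_def algebra_simps)
  then show "\<exists>D. ((\<lambda>y. inverse (f y)) has_derivative D) (at y) \<and> clinear_fun sc D" by blast
qed
lemma holo_cong:
  assumes "holo_on sc U f" "open U" "\<And>y. y \<in> U \<Longrightarrow> f y = g y"
  shows "holo_on sc U g"
  unfolding holo_on_def
proof (intro ballI)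
  fix y assume y: "y \<in> U"
  obtain D where "(f has_derivative D) (at y)" "clinear_fun sc D" using assms(1) y unfolding holo_on_def by blast
  then show "\<exists>D. (g has_derivative D) (at y) \<and> clinear_fun sc D"
    using has_derivative_transform_within_open[of f D y UNIV U g] assms(2,3) y by auto
qed
lemma holo_dual: "L \<in> dual_space sc \<Longrightarrow> holo_on sc U L"
  unfolding holo_on_def dual_space_def
  using bounded_linear.has_derivative[OF _ has_derivative_ident] by fastforce

lemma bounded_image_iff: "bounded (f ` S) \<longleftrightarrow> (\<exists>M. \<forall>y\<in>S. cmod (f y) \<le> M)"
  unfolding bounded_iff by (simp add: ball_simps)

lemma bounded_mult_comp:
  fixes f g :: "'b \<Rightarrow> complex"
  assumes "bounded (f ` S)" "bounded (g ` S)"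
  shows "bounded ((\<lambda>x. f x * g x) ` S)"
proof -
  obtain B C where B: "\<forall>y\<in>S. cmod (f y) \<le> B" and C: "\<forall>y\<in>S. cmod (g y) \<le> C"
    using assms unfolding bounded_image_iff by blast
  have "\<forall>y\<in>S. cmod (f y * g y) \<le> max B 0 * max C 0"
  proof
    fix y assume y: "y \<in> S"
    have "cmod (f y) \<le> max B 0" "cmod (g y) \<le> max C 0" using B C y by (auto simp: le_max_iff_disj)
    then have "cmod (f y) * cmod (g y) \<le> max B 0 * max C 0" by (rule mult_mono) simp_all
    then show "cmod (f y * g y) \<le> max B 0 * max C 0" by (simp add: norm_mult)
  qed
  then show ?thesis unfolding bounded_image_iff by blast
qed

lemma bounded_const_image: "bounded ((\<lambda>_. c::complex) ` S)"
  unfolding bounded_image_iff by (intro exI[of _ "cmod c"]) simp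

lemma restr_ball_in:
  assumes "holo_on sc (ball 0 1) f" "bounded (f ` ball 0 1)" "continuous_on (cball 0 1) f"
  shows "restr_ball f \<in> A_inf sc"
proof -
  have eq: "\<And>y. y \<in> cball 0 1 \<Longrightarrow> restr_ball f y = f y" unfolding restr_ball_def by simp
  have eq2: "\<And>y. y \<in> ball 0 1 \<Longrightarrow> f y = restr_ball f y" using eq by simp
  have 1: "holo_on sc (ball 0 1) (restr_ball f)" by (rule holo_cong[OF assms(1) open_ball eq2])
  have "restr_ball f ` ball 0 1 = f ` ball 0 1" using eq2 by (intro image_cong) auto
  then have 2: "bounded (restr_ball f ` ball 0 1)" using assms(2) by simp
  have 3: "continuous_on (cball 0 1) (restr_ball f)"
    using continuous_on_cong[of "cball 0 1" "cball 0 1" "restr_ball f" f] eq assms(3) by blast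
  have 4: "\<forall>x. 1 < norm x \<longrightarrow> restr_ball f x = 0" unfolding restr_ball_def by simp
  show ?thesis unfolding A_inf_def using 1 2 3 4 by blast
qed

lemma A_add: "f \<in> A_inf sc \<Longrightarrow> g \<in> A_inf sc \<Longrightarrow> (\<lambda>y. f y + g y) \<in> A_inf sc"
  unfolding A_inf_def
proof (elim CollectE conjE, intro CollectI conjI)
  assume "holo_on sc (ball 0 1) f" "holo_on sc (ball 0 1) g"
  then show "holo_on sc (ball 0 1) (\<lambda>y. f y + g y)" by (rule holo_add)
  assume "bounded (f ` ball 0 1)" "bounded (g ` ball 0 1)"
  then show "bounded ((\<lambda>y. f y + g y) ` ball 0 1)" by (rule bounded_plus_comp)
  assume "continuous_on (cball 0 1) f" "continuous_on (cball 0 1) g"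
  then show "continuous_on (cball 0 1) (\<lambda>y. f y + g y)" by (rule continuous_on_add)
  assume "\<forall>x. 1 < norm x \<longrightarrow> f x = 0" "\<forall>x. 1 < norm x \<longrightarrow> g x = 0"
  then show "\<forall>x. 1 < norm x \<longrightarrow> f x + g x = 0" by simp
qed
lemma A_mult: "f \<in> A_inf sc \<Longrightarrow> g \<in> A_inf sc \<Longrightarrow> (\<lambda>y. f y * g y) \<in> A_inf sc"
  unfolding A_inf_def
proof (elim CollectE conjE, intro CollectI conjI)
  assume "holo_on sc (ball 0 1) f" "holo_on sc (ball 0 1) g"
  then show "holo_on sc (ball 0 1) (\<lambda>y. f y * g y)" by (rule holo_mult)
  assume "bounded (f ` ball 0 1)" "bounded (g ` ball 0 1)"
  then show "bounded ((\<lambda>y. f y * g y) ` ball 0 1)" by (rule bounded_mult_comp)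
  assume "continuous_on (cball 0 1) f" "continuous_on (cball 0 1) g"
  then show "continuous_on (cball 0 1) (\<lambda>y. f y * g y)" by (rule continuous_on_mult)
  assume "\<forall>x. 1 < norm x \<longrightarrow> f x = 0" "\<forall>x. 1 < norm x \<longrightarrow> g x = 0"
  then show "\<forall>x. 1 < norm x \<longrightarrow> f x * g x = 0" by simp
qed
lemma A_const_ball: "(\<lambda>y. if norm y \<le> 1 then c else 0) \<in> A_inf sc"
proof -
  have "restr_ball (\<lambda>_. c) \<in> A_inf sc"
    by (rule restr_ball_in) (auto intro: holo_const bounded_const_image continuous_on_const)
  then show ?thesis unfolding restr_ball_def .
qed
lemma A_cmult: "f \<in> A_inf sc \<Longrightarrow> (\<lambda>y. c * f y) \<in> A_inf sc"
proof -
  assume f: "f \<in> A_inf sc"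
  have "(\<lambda>y. (if norm y \<le> 1 then c else 0) * f y) \<in> A_inf sc" by (rule A_mult[OF A_const_ball f])
  moreover have "(\<lambda>y. (if norm y \<le> 1 then c else 0) * f y) = (\<lambda>y. c * f y)"
    using f unfolding A_inf_def by (auto simp: fun_eq_iff)
  ultimately show ?thesis by simp
qed

lemma A_one: "restr_ball (\<lambda>_. 1) \<in> A_inf sc"
  using A_const_ball[of 1] unfolding restr_ball_def .

lemma A_dual: "L \<in> dual_space sc \<Longrightarrow> restr_ball L \<in> A_inf sc"
proof (rule restr_ball_in)
  assume L: "L \<in> dual_space sc"
  then have bl: "bounded_linear L" unfolding dual_space_def by simp
  show "holo_on sc (ball 0 1) L" using L by (rule holo_dual)
  show "bounded (L ` ball 0 1)" using bl by (simp add: bounded_linear_image)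
  show "continuous_on (cball 0 1) L" using bl by (simp add: linear_continuous_on)
qed




lemma lur_eta:
  fixes x :: "'a::real_normed_vector"
  assumes nx: "norm x = 1" and lur: "loc_unif_convex_at x"
    and Ladd: "\<And>u v. L (u + v) = L u + L v" and Lx: "L x = 1" and Lb: "\<And>y. cmod (L y) \<le> norm y"
    and d: "\<delta> > 0"
  shows "\<exists>\<eta>>0. \<forall>y. norm y \<le> 1 \<longrightarrow> cmod (1 + L y) > 2 - \<eta> \<longrightarrow> norm (y - x) < \<delta>"
proof (rule ccontr)
  assume "\<not> ?thesis"
  hence "\<forall>n. \<exists>y. norm y \<le> 1 \<and> cmod (1 + L y) > 2 - 1 / real (Suc n) \<and> \<not> norm (y - x) < \<delta>"
    by (metis of_nat_0_less_iff zero_less_Suc zero_less_divide_1_iff)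
  then obtain Y where Y: "\<And>n. norm (Y n) \<le> 1" "\<And>n. cmod (1 + L (Y n)) > 2 - 1 / real (Suc n)"
    "\<And>n. norm (Y n - x) \<ge> \<delta>" by (metis not_less)
  have lim: "(\<lambda>n. 1 / real (Suc n)) \<longlonglongrightarrow> 0"
    using LIMSEQ_Suc[OF lim_inverse_n'] by simp
  have c1: "cmod (1 + L y) \<le> norm (x + y)" for y using Lb[of "x + y"] by (simp add: Ladd Lx)
  have c2: "cmod (1 + L y) \<le> 1 + norm y" for y
    by (metis Lb add_left_mono norm_one norm_triangle_ineq order_trans)
  have "(\<lambda>n. norm (x + Y n)) \<longlonglongrightarrow> 2"
  proof (rule tendsto_sandwich[of "\<lambda>n. 2 - 1 / real (Suc n)" _ _ "\<lambda>n. 2"])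
    show "\<forall>\<^sub>F n in sequentially. 2 - 1 / real (Suc n) \<le> norm (x + Y n)"
    proof (rule always_eventually, rule allI)
      fix n show "2 - 1 / real (Suc n) \<le> norm (x + Y n)" using Y(2)[of n] c1[of "Y n"] by linarith
    qed
    show "\<forall>\<^sub>F n in sequentially. norm (x + Y n) \<le> 2"
      using Y(1) nx by (simp add: norm_triangle_le)
    show "(\<lambda>n. 2 - 1 / real (Suc n)) \<longlonglongrightarrow> 2" using tendsto_diff[OF tendsto_const lim] by simp
  qed simp
  moreover have "(\<lambda>n. norm (Y n)) \<longlonglongrightarrow> 1"
  proof (rule tendsto_sandwich[of "\<lambda>n. 1 - 1 / real (Suc n)" _ _ "\<lambda>n. 1"])
    show "\<forall>\<^sub>F n in sequentially. 1 - 1 / real (Suc n) \<le> norm (Y n)"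
    proof (rule always_eventually, rule allI)
      fix n show "1 - 1 / real (Suc n) \<le> norm (Y n)" using Y(2)[of n] c2[of "Y n"] by linarith
    qed
    show "\<forall>\<^sub>F n in sequentially. norm (Y n) \<le> 1" using Y(1) by simp
    show "(\<lambda>n. 1 - 1 / real (Suc n)) \<longlonglongrightarrow> 1" using tendsto_diff[OF tendsto_const lim] by simp
  qed simp
  ultimately have "(\<lambda>n. norm (Y n - x)) \<longlonglongrightarrow> 0" using lur nx unfolding loc_unif_convex_at_def by simp
  from order_tendstoD(2)[OF this d] obtain N where "\<And>n. n \<ge> N \<Longrightarrow> norm (Y n - x) < \<delta>"
    unfolding eventually_sequentially by blast
  then show False using Y(3)[of N] by (meson le_refl not_le)
qed

definition oneB :: "'a::real_normed_vector \<Rightarrow> complex" where "oneB = restr_ball (\<lambda>_. 1)"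

lemma oneB_in: "oneB \<in> A_inf sc" unfolding oneB_def by (rule A_one)

lemma A_zero_out: "f \<in> A_inf sc \<Longrightarrow> 1 < norm y \<Longrightarrow> f y = 0" unfolding A_inf_def by blast

lemma tau_one:
  assumes t: "\<tau> \<in> spectrum_A_inf sc" shows "\<tau> oneB = 1"
proof -
  obtain f where f: "f \<in> A_inf sc" "\<tau> f \<noteq> 0" using t unfolding spectrum_A_inf_def by blast
  have eq: "(\<lambda>y. f y * oneB y) = f"
    using A_zero_out[OF f(1)] by (auto simp: oneB_def restr_ball_def fun_eq_iff)
  have "\<tau> (\<lambda>y. f y * oneB y) = \<tau> f * \<tau> oneB" using t f oneB_in unfolding spectrum_A_inf_def by blast
  then show ?thesis using eq f(2) by simp
qed

lemma tau_add: "\<tau> \<in> spectrum_A_inf sc \<Longrightarrow> f \<in> A_inf sc \<Longrightarrow> g \<in> A_inf sc \<Longrightarrow> \<tau> (\<lambda>x. f x + g x) = \<tau> f + \<tau> g"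
  unfolding spectrum_A_inf_def by blast
lemma tau_cmult: "\<tau> \<in> spectrum_A_inf sc \<Longrightarrow> f \<in> A_inf sc \<Longrightarrow> \<tau> (\<lambda>x. c * f x) = c * \<tau> f"
  unfolding spectrum_A_inf_def by blast
lemma tau_mult: "\<tau> \<in> spectrum_A_inf sc \<Longrightarrow> f \<in> A_inf sc \<Longrightarrow> g \<in> A_inf sc \<Longrightarrow> \<tau> (\<lambda>x. f x * g x) = \<tau> f * \<tau> g"
  unfolding spectrum_A_inf_def by blast

lemma tau_bound:
  assumes t: "\<tau> \<in> spectrum_A_inf sc" and u: "u \<in> A_inf sc" and S: "\<And>y. cmod (u y) \<le> S"
  shows "cmod (\<tau> u) \<le> S"
proof (rule ccontr)
  assume "\<not> ?thesis"
  hence lt: "S < cmod (\<tau> u)" by simp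
  define l where "l = \<tau> u"
  define w where "w = (\<lambda>y. u y + (- l) * oneB y)"
  have w: "w \<in> A_inf sc" unfolding w_def by (intro A_add A_cmult u oneB_in)
  have "\<tau> w = \<tau> u + \<tau> (\<lambda>y. (- l) * oneB y)" unfolding w_def by (rule tau_add[OF t u A_cmult[OF oneB_in]])
  also have "\<tau> (\<lambda>y. (- l) * oneB y) = - l" using tau_cmult[OF t oneB_in, of "-l"] tau_one[OF t] by simp
  finally have tw: "\<tau> w = 0" using l_def by simp
  have ne: "u y - l \<noteq> 0" for y using S[of y] lt l_def by auto
  have lb: "cmod (\<tau> u) - S \<le> cmod (u y - l)" for y
    using S[of y] l_def norm_triangle_ineq2[of l "u y"] by (simp add: norm_minus_commute)
  define v where "v = restr_ball (\<lambda>y. inverse (u y - l))"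
  have v: "v \<in> A_inf sc" unfolding v_def
  proof (rule restr_ball_in)
    have "holo_on sc (ball 0 1) (\<lambda>y. u y + (- l))"
      using u holo_add[OF _ holo_const, of sc "ball 0 1" u "- l"] unfolding A_inf_def by blast
    then show "holo_on sc (ball 0 1) (\<lambda>y. inverse (u y - l))"
      using holo_inverse[of sc "ball 0 1" "\<lambda>y. u y + (- l)"] ne by simp
    have "cmod (inverse (u y - l)) \<le> inverse (cmod (\<tau> u) - S)" for y
      using lb[of y] lt by (simp add: norm_inverse le_imp_inverse_le)
    then show "bounded ((\<lambda>y. inverse (u y - l)) ` ball 0 1)" unfolding bounded_image_iff by blast
    have "continuous_on (cball 0 1) u" using u unfolding A_inf_def by blast
    then show "continuous_on (cball 0 1) (\<lambda>y. inverse (u y - l))"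
      using ne by (intro continuous_intros) auto
  qed
  have "(\<lambda>y. w y * v y) = oneB"
  proof
    fix y show "w y * v y = oneB y"
    proof (cases "norm y \<le> 1")
      case True then show ?thesis using ne[of y] by (simp add: w_def v_def oneB_def restr_ball_def)
    next
      case False then show ?thesis using A_zero_out[OF u, of y] by (simp add: w_def v_def oneB_def restr_ball_def)
    qed
  qed
  hence "\<tau> oneB = \<tau> w * \<tau> v" using tau_mult[OF t w v] by simp
  then show False using tw tau_one[OF t] by simp
qed

lemma tau_pow:
  assumes t: "\<tau> \<in> spectrum_A_inf sc" and h: "h \<in> A_inf sc" and th: "\<tau> h = 1"
  shows "(\<lambda>y. h y ^ Suc n) \<in> A_inf sc \<and> \<tau> (\<lambda>y. h y ^ Suc n) = 1"
proof (induction n)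
  case 0 then show ?case using h th by simp
next
  case (Suc n)
  have eq: "(\<lambda>y. h y ^ Suc (Suc n)) = (\<lambda>y. h y * h y ^ Suc n)" by simp
  show ?case unfolding eq using Suc A_mult[OF h] tau_mult[OF t h] th by simp
qed




lemma dual_add: "L \<in> dual_space sc \<Longrightarrow> L (u + v) = L u + L v"
  unfolding dual_space_def clinear_fun_def by blast
lemma dual_bl: "L \<in> dual_space sc \<Longrightarrow> bounded_linear L"
  unfolding dual_space_def by blast
lemma dual_diff: "L \<in> dual_space sc \<Longrightarrow> L (u - v) = L u - L v"
  using dual_bl linear_diff bounded_linear.linear by blast

lemma peak_eval:
  fixes sc :: "complex \<Rightarrow> 'a::banach \<Rightarrow> 'a" and x :: 'a
  assumes nx: "norm x = 1" and lur: "loc_unif_convex_at x"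
    and L: "L \<in> dual_space sc" and Lx: "L x = 1" and Lb: "\<And>y. cmod (L y) \<le> norm y"
    and t: "\<tau> \<in> spectrum_A_inf sc"
    and th: "\<tau> (\<lambda>y. (1/2) * (oneB y + restr_ball L y)) = 1"
    and f: "f \<in> A_inf sc"
  shows "\<tau> f = f x"
proof -
  define h where "h = (\<lambda>y. (1/2) * (oneB y + restr_ball L y))"
  have hA: "h \<in> A_inf sc" unfolding h_def by (intro A_cmult A_add oneB_in A_dual L)
  have th': "\<tau> h = 1" using th h_def by simp
  have hval: "norm y \<le> 1 \<Longrightarrow> h y = (1 + L y) / 2" for y
    unfolding h_def oneB_def restr_ball_def by simp
  have hle: "cmod (h y) \<le> 1" for y
  proof (cases "norm y \<le> 1")
    case True
    have "cmod (1 + L y) \<le> 1 + cmod (L y)" using norm_triangle_ineq[of 1 "L y"] by simp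
    also have "\<dots> \<le> 2" using Lb[of y] True by simp
    finally show ?thesis unfolding hval[OF True] by (simp add: norm_divide)
  next
    case False then show ?thesis unfolding h_def oneB_def restr_ball_def by simp
  qed
  define g where "g = (\<lambda>y. f y + (- f x) * oneB y)"
  have gA: "g \<in> A_inf sc" unfolding g_def by (intro A_add A_cmult f oneB_in)
  have "\<tau> g = \<tau> f + \<tau> (\<lambda>y. (- f x) * oneB y)" unfolding g_def by (rule tau_add[OF t f A_cmult[OF oneB_in]])
  also have "\<tau> (\<lambda>y. (- f x) * oneB y) = - f x" using tau_cmult[OF t oneB_in, of "- f x"] tau_one[OF t] by simp
  finally have tg: "\<tau> g = \<tau> f - f x" by simp
  have gx: "g x = 0" unfolding g_def oneB_def restr_ball_def using nx by simp
  have cg: "continuous_on (cball 0 1) g" using gA unfolding A_inf_def by blast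
  have small: "cmod (\<tau> g) \<le> 0 + e" if e: "e > 0" for e
  proof -
    obtain M0 where M0: "\<forall>y\<in>ball 0 1. cmod (g y) \<le> M0"
      using gA unfolding A_inf_def bounded_image_iff by blast
    have "g ` closure (ball 0 1) \<subseteq> cball 0 M0"
      by (rule image_closure_subset) (use cg M0 in auto)
    hence M0c: "\<forall>y\<in>cball 0 1. cmod (g y) \<le> M0" by auto
    define M where "M = max M0 0"
    have M: "cmod (g y) \<le> M" for y
    proof (cases "norm y \<le> 1")
      case True
      then have "cmod (g y) \<le> M0" using M0c by simp
      then show ?thesis using M_def by linarith
    next
      case False then show ?thesis using A_zero_out[OF gA, of y] M_def by simp
    qed
    have "x \<in> cball 0 1" using nx by simp
    then obtain d where d: "d > 0" and dd: "\<forall>y\<in>cball 0 1. dist y x < d \<longrightarrow> dist (g y) (g x) < e"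
      using cg e unfolding continuous_on_iff by blast
    obtain \<eta> where eta: "\<eta> > 0" and ee: "\<forall>y. norm y \<le> 1 \<longrightarrow> cmod (1 + L y) > 2 - \<eta> \<longrightarrow> norm (y - x) < d"
      using lur_eta[OF nx lur dual_add[OF L] Lx Lb d] by blast
    define q where "q = 1 - min \<eta> 1 / 2"
    have q0: "0 \<le> q" and q1: "q < 1" using eta q_def by auto
    have "(\<lambda>n. M * q ^ n) \<longlonglongrightarrow> M * 0"
      using q0 q1 by (intro tendsto_mult tendsto_const LIMSEQ_power_zero) simp
    from order_tendstoD(2)[OF this] e obtain N where N: "\<And>n. n \<ge> N \<Longrightarrow> M * q ^ n < e"
      unfolding eventually_sequentially by auto
    have MN: "M * q ^ Suc N < e" using N[of "Suc N"] by linarith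
    have hp: "(\<lambda>y. h y ^ Suc N) \<in> A_inf sc" "\<tau> (\<lambda>y. h y ^ Suc N) = 1"
      using tau_pow[OF t hA th'] by blast+
    have bnd: "cmod (g y * h y ^ Suc N) \<le> e" for y
    proof (cases "norm y \<le> 1")
      case False then show ?thesis using A_zero_out[OF gA, of y] e by simp
    next
      case True
      show ?thesis
      proof (cases "cmod (1 + L y) > 2 - \<eta>")
        case True2: True
        have "norm (y - x) < d" using ee True True2 by blast
        hence "cmod (g y) < e" using dd True gx by (simp add: dist_norm)
        moreover have "cmod (h y ^ Suc N) \<le> 1" unfolding norm_power by (rule power_le_one) (simp_all add: hle)
        ultimately have "cmod (g y) * cmod (h y ^ Suc N) \<le> e * 1"
          using e by (intro mult_mono) auto
        then show ?thesis by (simp add: norm_mult)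
      next
        case False2: False
        have "cmod (h y) = cmod (1 + L y) / 2" unfolding hval[OF True] by (simp add: norm_divide)
        also have "\<dots> \<le> q" using False2 q_def by auto
        finally have "cmod (h y) ^ Suc N \<le> q ^ Suc N" by (intro power_mono) auto
        hence "cmod (g y) * cmod (h y) ^ Suc N \<le> M * q ^ Suc N"
          using M[of y] q0 M_def by (intro mult_mono) auto
        then show ?thesis using MN by (simp add: norm_mult norm_power)
      qed
    qed
    have "cmod (\<tau> (\<lambda>y. g y * h y ^ Suc N)) \<le> e" by (rule tau_bound[OF t A_mult[OF gA hp(1)] bnd])
    moreover have "\<tau> (\<lambda>y. g y * h y ^ Suc N) = \<tau> g" using tau_mult[OF t gA hp(1)] hp(2) by simp
    ultimately show ?thesis by simp
  qed
  have "cmod (\<tau> g) \<le> 0" by (rule field_le_epsilon) (rule small)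
  then show ?thesis using tg by simp
qed

lemma ml_scale:
  assumes cb: "complex_banach sc" and A: "cont_multilinear sc k A"
  shows "A (\<lambda>_. r *\<^sub>R y) = (complex_of_real r) ^ k * A (\<lambda>_. y)"
proof -
  have agree: "\<And>v w. (\<forall>i<k. v i = w i) \<Longrightarrow> A v = A w"
    and lin: "\<And>i v. i < k \<Longrightarrow> clinear_fun sc (\<lambda>y. A (v(i := y)))"
    using A unfolding cont_multilinear_def by blast+
  have step: "j \<le> k \<Longrightarrow> A (\<lambda>i. if i < j then r *\<^sub>R y else y) = (complex_of_real r) ^ j * A (\<lambda>_. y)" for j
  proof (induction j)
    case 0 then show ?case by simp
  next
    case (Suc j)
    define v where "v = (\<lambda>i. if i < j then r *\<^sub>R y else y)"
    have jk: "j < k" using Suc by simp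
    have eq: "v(j := sc (complex_of_real r) (v j)) = (\<lambda>i. if i < Suc j then r *\<^sub>R y else y)"
      by (auto simp: v_def fun_eq_iff sc_real[OF cb])
    have "A (v(j := sc (complex_of_real r) (v j))) = complex_of_real r * A (v(j := v j))"
      using lin[OF jk, of v] unfolding clinear_fun_def by blast
    hence "A (\<lambda>i. if i < Suc j then r *\<^sub>R y else y) = complex_of_real r * A v" using eq by simp
    then show ?case using Suc v_def by simp
  qed
  have "A (\<lambda>_. r *\<^sub>R y) = A (\<lambda>i. if i < k then r *\<^sub>R y else y)" by (rule agree) simp
  then show ?thesis using step[of k] by simp
qed

lemma dual_poly:
  assumes L: "L \<in> dual_space sc" shows "cont_poly sc L"
proof -
  define A where "A = (\<lambda>(k::nat) (v::nat \<Rightarrow> 'a). if k = 0 then 0 else L (v 0))"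
  obtain K where K: "\<And>y. norm (L y) \<le> norm y * K" using bounded_linear.bounded[OF dual_bl[OF L]] by blast
  have clL: "clinear_fun sc L" using L unfolding dual_space_def by blast
  have "cont_multilinear sc k (A k)" if "k \<le> 1" for k
  proof (cases "k = 0")
    case True then show ?thesis unfolding cont_multilinear_def A_def by auto
  next
    case False
    hence k: "k = 1" using that by simp
    show ?thesis unfolding cont_multilinear_def
    proof (intro conjI allI impI)
      fix v w :: "nat \<Rightarrow> 'a" assume "\<forall>i<k. v i = w i"
      then show "A k v = A k w" using k A_def by simp
    next
      fix i v assume "i < k"
      then show "clinear_fun sc (\<lambda>y. A k (v(i := y)))" using k clL A_def by simp
    next
      show "\<exists>C. \<forall>v. cmod (A k v) \<le> C * (\<Prod>i<k. norm (v i))"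
        using k K A_def by (intro exI[of _ K]) (simp add: mult.commute)
    qed
  qed
  moreover have "\<forall>y. L y = (\<Sum>k\<le>1. A k (\<lambda>_. y))" unfolding A_def by simp
  ultimately show ?thesis unfolding cont_poly_def by blast
qed

lemma net_conv:
  assumes nx: "norm x = 1" and lur: "loc_unif_convex_at x"
    and L: "L \<in> dual_space sc" and Lx: "L x = 1" and Lb: "\<And>y. cmod (L y) \<le> norm y"
    and ev: "eventually (\<lambda>y. y \<in> ball 0 1) F" and lim: "(L \<longlongrightarrow> L x) F"
  shows "((\<lambda>y. y) \<longlongrightarrow> x) F"
  unfolding tendsto_iff
proof (intro allI impI)
  fix e :: real assume e: "e > 0"
  obtain \<eta> where eta: "\<eta> > 0" and ee: "\<forall>y. norm y \<le> 1 \<longrightarrow> cmod (1 + L y) > 2 - \<eta> \<longrightarrow> norm (y - x) < e"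
    using lur_eta[OF nx lur dual_add[OF L] Lx Lb e] by blast
  have "((\<lambda>y. cmod (1 + L y)) \<longlongrightarrow> cmod (1 + L x)) F" by (intro tendsto_norm tendsto_add tendsto_const lim)
  hence "((\<lambda>y. cmod (1 + L y)) \<longlongrightarrow> 2) F" using Lx by simp
  from order_tendstoD(1)[OF this, of "2 - \<eta>"] eta have "eventually (\<lambda>y. cmod (1 + L y) > 2 - \<eta>) F" by simp
  with ev show "eventually (\<lambda>y. dist y x < e) F"
    by eventually_elim (use ee in \<open>auto simp: dist_norm\<close>)
qed




theorem mainTheorem14:
  fixes sc :: "complex \<Rightarrow> 'a::banach \<Rightarrow> 'a" and x :: 'a
  assumes "complex_banach sc"
    and "norm x = 1"
    and "loc_unif_convex_at x"
  shows "\<forall>f\<in>A_inf sc. cluster_set sc f x = gelfand f ` fiber sc x \<and>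
                       poly_cluster_set sc f x = gelfand f ` poly_fiber sc x"
proof
  fix f assume f: "f \<in> A_inf sc"
  note cb = assms(1) and nx = assms(2) and lur = assms(3)
  obtain L where L: "L \<in> dual_space sc" and Lx: "L x = 1" and Lb: "\<And>y. cmod (L y) \<le> norm y"
    using complex_norming[OF cb nx] by blast
  have xc: "x \<in> cball 0 1" using nx by simp
  have oneBx: "oneB x = 1" using nx unfolding oneB_def restr_ball_def by simp
  define ev where "ev = (\<lambda>g::'a \<Rightarrow> complex. g x)"
  have ev4: "\<exists>g\<in>A_inf sc. g x \<noteq> 0" using oneB_in oneBx by (intro bexI[of _ oneB]) simp_all
  have ev_spec: "ev \<in> spectrum_A_inf sc"
    unfolding spectrum_A_inf_def ev_def using ev4 by simp
  have ev_fib: "ev \<in> fiber sc x"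
    unfolding fiber_def using ev_spec nx by (simp add: ev_def restr_ball_def)
  have ev_pfib: "ev \<in> poly_fiber sc x"
    unfolding poly_fiber_def using ev_spec by (simp add: ev_def)
  define h where "h = (\<lambda>y. (1/2) * (oneB y + restr_ball L y))"
  have hA: "h \<in> A_inf sc" unfolding h_def by (intro A_cmult A_add oneB_in A_dual L)
  have hx: "h x = 1" unfolding h_def oneB_def restr_ball_def using nx Lx by simp
  have fib_val: "\<tau> f = f x" if tf: "\<tau> \<in> fiber sc x" for \<tau>
  proof -
    have t: "\<tau> \<in> spectrum_A_inf sc" and tL: "\<tau> (restr_ball L) = L x"
      using tf L unfolding fiber_def by auto
    have "\<tau> h = (1/2) * \<tau> (\<lambda>y. oneB y + restr_ball L y)"
      unfolding h_def by (rule tau_cmult[OF t A_add[OF oneB_in A_dual[OF L]]])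
    also have "\<tau> (\<lambda>y. oneB y + restr_ball L y) = \<tau> oneB + \<tau> (restr_ball L)"
      by (rule tau_add[OF t oneB_in A_dual[OF L]])
    also have "(1/2) * (\<tau> oneB + \<tau> (restr_ball L)) = 1" using tau_one[OF t] tL Lx by simp
    finally show ?thesis using peak_eval[OF nx lur L Lx Lb t _ f] h_def by simp
  qed
  have huc: "uniformly_continuous_on (ball 0 1) h"
    unfolding uniformly_continuous_on_def
  proof (intro allI impI)
    fix e :: real assume e: "e > 0"
    show "\<exists>d>0. \<forall>y\<in>ball 0 1. \<forall>y'\<in>ball 0 1. dist y' y < d \<longrightarrow> dist (h y') (h y) < e"
    proof (intro exI[of _ e] conjI ballI impI)
      fix y y' :: 'a assume y: "y \<in> ball 0 1" and y': "y' \<in> ball 0 1" and dy: "dist y' y < e"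
      have eqh: "h y' - h y = (1/2) * L (y' - y)"
        using y y' unfolding h_def oneB_def restr_ball_def by (simp add: dual_diff[OF L] field_simps)
      have "dist (h y') (h y) = cmod (L (y' - y)) / 2" unfolding dist_norm eqh by (simp add: norm_mult)
      also have "\<dots> \<le> norm (y' - y) / 2" using Lb by simp
      also have "\<dots> < e" using dy e by (simp add: dist_norm)
      finally show "dist (h y') (h y) < e" .
    qed (use e in simp)
  qed
  have pfib_val: "\<tau> f = f x" if tf: "\<tau> \<in> poly_fiber sc x" for \<tau>
  proof -
    have t: "\<tau> \<in> spectrum_A_inf sc" and th: "\<tau> h = h x"
      using tf hA huc unfolding poly_fiber_def by auto
    show ?thesis using peak_eval[OF nx lur L Lx Lb t _ f] th hx h_def by simp
  qed
  have gev: "f x = gelfand f ev" by (simp add: gelfand_def ev_def)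
  have G1: "gelfand f ` fiber sc x = {f x}"
  proof
    show "gelfand f ` fiber sc x \<subseteq> {f x}" by (rule image_subsetI) (simp add: gelfand_def fib_val)
    show "{f x} \<subseteq> gelfand f ` fiber sc x" using rev_image_eqI[of ev "fiber sc x" "f x" "gelfand f", OF ev_fib gev] by simp
  qed
  have G2: "gelfand f ` poly_fiber sc x = {f x}"
  proof
    show "gelfand f ` poly_fiber sc x \<subseteq> {f x}" by (rule image_subsetI) (simp add: gelfand_def pfib_val)
    show "{f x} \<subseteq> gelfand f ` poly_fiber sc x" using rev_image_eqI[of ev "poly_fiber sc x" "f x" "gelfand f", OF ev_pfib gev] by simp
  qed
  have fcont: "continuous_on (cball 0 1) f" using f unfolding A_inf_def by blast
  have lim_f: "(f \<longlongrightarrow> f x) F" if ev: "eventually (\<lambda>y. y \<in> ball 0 1) F" and lim: "(L \<longlongrightarrow> L x) F" for F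
  proof -
    have "((\<lambda>y. y) \<longlongrightarrow> x) F" by (rule net_conv[OF nx lur L Lx Lb ev lim])
    moreover have "eventually (\<lambda>y. y \<in> cball 0 1) F" using ev by eventually_elim simp
    ultimately show ?thesis using continuous_on_tendsto_compose[OF fcont _ xc] by blast
  qed
  define t where "t n = 1 - 1 / real (Suc (Suc n))" for n
  define F0 where "F0 = filtermap (\<lambda>n. t n *\<^sub>R x) sequentially"
  have F0nb: "F0 \<noteq> bot" unfolding F0_def by (simp add: filtermap_bot_iff)
  have tb: "0 < t n \<and> t n < 1" for n
  proof -
    have "1 / real (Suc (Suc n)) \<le> 1 / 2" by (simp add: divide_simps)
    moreover have "0 < 1 / real (Suc (Suc n))" by simp
    ultimately show ?thesis unfolding t_def by linarith
  qed
  have F0ball: "eventually (\<lambda>y. y \<in> ball 0 1) F0"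
    unfolding F0_def eventually_filtermap using tb nx by (simp add: abs_of_pos)
  have tlim: "t \<longlonglongrightarrow> 1"
  proof -
    have l1: "(\<lambda>n. 1 / real (Suc n)) \<longlonglongrightarrow> 0" using LIMSEQ_Suc[OF lim_inverse_n'] by simp
    have "(\<lambda>n. 1 / real (Suc (Suc n))) \<longlonglongrightarrow> 0" using LIMSEQ_Suc[OF l1] by simp
    then show ?thesis unfolding t_def using tendsto_diff[OF tendsto_const, of _ 0 sequentially 1] by simp
  qed
  have seqlim: "(\<lambda>n. t n *\<^sub>R x) \<longlonglongrightarrow> x" using tendsto_scaleR[OF tlim tendsto_const, of x] by simp
  have F0cont: "(\<phi> \<longlongrightarrow> \<phi> x) F0" if "continuous_on (cball 0 1) \<phi>" for \<phi> :: "'a \<Rightarrow> complex"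
  proof -
    have "eventually (\<lambda>n. t n *\<^sub>R x \<in> cball 0 1) sequentially" using tb nx by (simp add: abs_of_pos less_imp_le)
    then have "((\<lambda>n. \<phi> (t n *\<^sub>R x)) \<longlongrightarrow> \<phi> x) sequentially"
      using continuous_on_tendsto_compose[OF that seqlim xc] by blast
    then show ?thesis unfolding F0_def filterlim_filtermap .
  qed
  have PF0: "(P \<longlongrightarrow> P x) F0" if P: "cont_poly sc P" for P
  proof -
    obtain m A where A: "\<And>k. k \<le> m \<Longrightarrow> cont_multilinear sc k (A k)" and PA: "\<And>y. P y = (\<Sum>k\<le>m. A k (\<lambda>_. y))"
      using P unfolding cont_poly_def by blast
    have eq: "P (t n *\<^sub>R x) = (\<Sum>k\<le>m. (complex_of_real (t n)) ^ k * A k (\<lambda>_. x))" for n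
      unfolding PA by (intro sum.cong refl ml_scale[OF cb A]) simp
    have lim: "(\<lambda>n. \<Sum>k\<le>m. (complex_of_real (t n)) ^ k * A k (\<lambda>_. x)) \<longlonglongrightarrow> (\<Sum>k\<le>m. (complex_of_real 1) ^ k * A k (\<lambda>_. x))"
      by (intro tendsto_sum tendsto_mult tendsto_power tendsto_of_real tlim tendsto_const)
    have e1: "(\<lambda>n. P (t n *\<^sub>R x)) = (\<lambda>n. \<Sum>k\<le>m. (complex_of_real (t n)) ^ k * A k (\<lambda>_. x))"
      by (rule ext) (rule eq)
    have e2: "P x = (\<Sum>k\<le>m. (complex_of_real 1) ^ k * A k (\<lambda>_. x))" using PA[of x] by simp
    have "(\<lambda>n. P (t n *\<^sub>R x)) \<longlonglongrightarrow> P x" using lim unfolding e1 e2 .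
    then show ?thesis unfolding F0_def filterlim_filtermap .
  qed
  have fF0: "(f \<longlongrightarrow> f x) F0" by (rule F0cont[OF fcont])
  have C: "cluster_set sc f x = {f x}"
  proof
    show "cluster_set sc f x \<subseteq> {f x}"
    proof
      fix l assume "l \<in> cluster_set sc f x"
      then obtain F where F: "F \<noteq> bot" "eventually (\<lambda>y. y \<in> ball 0 1) F"
        "\<forall>L\<in>dual_space sc. (L \<longlongrightarrow> L x) F" "(f \<longlongrightarrow> l) F" unfolding cluster_set_def by blast
      have "(f \<longlongrightarrow> f x) F" using lim_f[OF F(2)] F(3) L by blast
      then show "l \<in> {f x}" using tendsto_unique[OF F(1) F(4)] by simp
    qed
    have "\<forall>L'\<in>dual_space sc. (L' \<longlongrightarrow> L' x) F0"
    proof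
      fix L' assume "L' \<in> dual_space sc"
      then have "continuous_on (cball 0 1) L'" using dual_bl linear_continuous_on by blast
      then show "(L' \<longlongrightarrow> L' x) F0" by (rule F0cont)
    qed
    then show "{f x} \<subseteq> cluster_set sc f x"
      unfolding cluster_set_def using F0nb F0ball fF0 by blast
  qed
  have P: "poly_cluster_set sc f x = {f x}"
  proof
    show "poly_cluster_set sc f x \<subseteq> {f x}"
    proof
      fix l assume "l \<in> poly_cluster_set sc f x"
      then obtain F where F: "F \<noteq> bot" "eventually (\<lambda>y. y \<in> ball 0 1) F"
        "\<forall>P. cont_poly sc P \<longrightarrow> (P \<longlongrightarrow> P x) F" "(f \<longlongrightarrow> l) F" unfolding poly_cluster_set_def by blast
      have "(f \<longlongrightarrow> f x) F" using lim_f[OF F(2)] F(3) dual_poly[OF L] by blast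
      then show "l \<in> {f x}" using tendsto_unique[OF F(1) F(4)] by simp
    qed
    show "{f x} \<subseteq> poly_cluster_set sc f x"
      unfolding poly_cluster_set_def using F0nb F0ball fF0 PF0 by blast
  qed
  show "cluster_set sc f x = gelfand f ` fiber sc x \<and> poly_cluster_set sc f x = gelfand f ` poly_fiber sc x"
    using C P G1 G2 by simp
qed



end
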